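(* Let $\lambda$ be a partition with $\ell\geq 4$ positive parts, and let $n\geq\ell$. If $\lambda=(3^m,2,1^{\ell-m-1})$ for some $m\in\{1,\ldots,\ell-2\}$, then the poset $\mathcal B_\lambda^n$ is not a lattice.
   Context: Superscripts denote repeated parts, e.g. $(3^2,2,1)=(3,3,2,1)$. For $N\geq 1$ and a partition $\nu$ with at most $N$ positive parts, $\mathcal B_\nu^N$ is the set of semistandard Young tableaux of shape $\nu$ (rows weakly increasing, columns strictly increasing) with entries in $\{1,\ldots,N+1\}$, partially ordered by the reflexive transitive closure of $T<F_i(T)$ for $i\in\{1,\ldots,N\}$ with $F_i(T)\neq 0$. Here $F_i$ is the type A crystal lowering operator: in the reading word of $T$ (rows read from bottom to top, each row left to right) keep only letters $i$ and $i+1$, replace each $i$ by ")" and each $i+1$ by "(", and match parentheses in the usual way; if there is no unmatched ")", $F_i(T)=0$; otherwise $F_i(T)$ is obtained by changing the entry $i$ corresponding to the rightmost unmatched ")" into $i+1$. *)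

theory Defs
  imports Main
begin

text \<open>Partitions are lists of weakly decreasing positive naturals.
  A tableau of shape nu is a list of rows (row 0 is the top row),
  row r has length nu ! r; entries are naturals.\<close>

definition is_partition :: "nat list \<Rightarrow> bool" where
  "is_partition nu \<longleftrightarrow> (\<forall>k<length nu. 0 < nu ! k) \<and> sorted (rev nu)"

definition ssyt :: "nat \<Rightarrow> nat list \<Rightarrow> nat list list \<Rightarrow> bool" where
  "ssyt N nu T \<longleftrightarrow>
     length T = length nu \<and>
     (\<forall>r<length nu. length (T ! r) = nu ! r) \<and>
     (\<forall>r<length nu. \<forall>c<nu ! r. 1 \<le> T ! r ! c \<and> T ! r ! c \<le> N + 1) \<and>
     (\<forall>r<length nu. \<forall>c. Suc c < nu ! r \<longrightarrow> T ! r ! c \<le> T ! r ! Suc c) \<and>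
     (\<forall>r c. Suc r < length nu \<and> c < nu ! Suc r \<longrightarrow> T ! r ! c < T ! Suc r ! c)"

definition reading_word :: "nat list list \<Rightarrow> nat list" where
  "reading_word T = concat (rev T)"

fun split_lengths :: "nat list \<Rightarrow> 'a list \<Rightarrow> 'a list list" where
  "split_lengths [] w = []"
| "split_lengths (l # ls) w = take l w # split_lengths ls (drop l w)"

definition unread :: "nat list \<Rightarrow> nat list \<Rightarrow> nat list list" where
  "unread nu w = rev (split_lengths (rev nu) w)"

text \<open>Positions (in the word, 0-based, counted from offset p) of the letters i that
  are unmatched ")" when i is read as ")" and i+1 as "(" ; k is the number of
  currently unmatched "(".\<close>
fun unmatched_pos :: "nat \<Rightarrow> nat \<Rightarrow> nat \<Rightarrow> nat list \<Rightarrow> nat list" where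
  "unmatched_pos i k p [] = []"
| "unmatched_pos i k p (x # xs) =
     (if x = i then
        (if 0 < k then unmatched_pos i (k - 1) (Suc p) xs
         else p # unmatched_pos i k (Suc p) xs)
      else if x = Suc i then unmatched_pos i (Suc k) (Suc p) xs
      else unmatched_pos i k (Suc p) xs)"

text \<open>Crystal lowering operator F_i on tableaux; None plays the role of 0.\<close>
definition crystal_F :: "nat \<Rightarrow> nat list list \<Rightarrow> nat list list option" where
  "crystal_F i T =
     (let w = reading_word T; ps = unmatched_pos i 0 0 w in
      if ps = [] then None
      else Some (unread (map length T) (w[last ps := Suc i])))"

definition crystal_B :: "nat list \<Rightarrow> nat \<Rightarrow> nat list list set" where
  "crystal_B nu N = {T. ssyt N nu T}"

definition crystal_step :: "nat list \<Rightarrow> nat \<Rightarrow> (nat list list \<times> nat list list) set" where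
  "crystal_step nu N =
     {(T, T'). T \<in> crystal_B nu N \<and> (\<exists>i\<in>{1..N}. crystal_F i T = Some T')}"

definition crystal_le :: "nat list \<Rightarrow> nat \<Rightarrow> nat list list \<Rightarrow> nat list list \<Rightarrow> bool" where
  "crystal_le nu N T T' \<longleftrightarrow> (T, T') \<in> (crystal_step nu N)\<^sup>*"

definition is_lattice_on :: "'a set \<Rightarrow> ('a \<Rightarrow> 'a \<Rightarrow> bool) \<Rightarrow> bool" where
  "is_lattice_on S le \<longleftrightarrow>
     (\<forall>x\<in>S. \<forall>y\<in>S.
        (\<exists>z\<in>S. le x z \<and> le y z \<and> (\<forall>u\<in>S. le x u \<and> le y u \<longrightarrow> le z u)) \<and>
        (\<exists>z\<in>S. le z x \<and> le z y \<and> (\<forall>u\<in>S. le u x \<and> le u y \<longrightarrow> le u z)))"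

end

theory Submission
  imports Defs
begin


lemma up_skip_pre:
  "(\<forall>y\<in>set xs. y \<noteq> i \<and> y \<noteq> Suc i) \<Longrightarrow>
   unmatched_pos i k p (xs @ ys) = unmatched_pos i k (p + length xs) ys"
  by (induction xs arbitrary: p) auto

lemma up_nil:
  "(\<forall>y\<in>set ys. y \<noteq> i \<and> y \<noteq> Suc i) \<Longrightarrow> unmatched_pos i k p ys = []"
  by (induction ys arbitrary: p) auto

lemma up_skip_suf:
  "(\<forall>y\<in>set ys. y \<noteq> i \<and> y \<noteq> Suc i) \<Longrightarrow>
   unmatched_pos i k p (xs @ ys) = unmatched_pos i k p xs"
  by (induction i k p xs rule: unmatched_pos.induct) (auto simp: up_nil)

lemma up_offset:
  "unmatched_pos i k (p + q) xs = map (\<lambda>x. x + q) (unmatched_pos i k p xs)"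
  by (induction i k p xs arbitrary: q rule: unmatched_pos.induct) auto

lemma up_props:
  "q \<in> set (unmatched_pos i k p w) \<Longrightarrow> p \<le> q \<and> q < p + length w \<and> w ! (q - p) = i"
proof (induction i k p w rule: unmatched_pos.induct)
  case (1 i k p)
  then show ?case by simp
next
  case (2 i k p x xs)
  then show ?case
    by (auto split: if_splits simp: nth_Cons' Suc_diff_le)
qed

lemma split_lengths_concat:
  "split_lengths (map length Ts) (concat Ts) = Ts"
  by (induction Ts) auto

lemma concat_split_lengths:
  "concat (split_lengths ls w) = take (sum_list ls) w"
  by (induction ls arbitrary: w) (auto simp: take_add)

lemma unread_rw: "unread (map length T) (reading_word T) = T"
  unfolding unread_def reading_word_def
  by (simp add: rev_map split_lengths_concat)

lemma rw_unread:
  assumes "length w = length (reading_word T)"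
  shows "reading_word (unread (map length T) w) = w"
proof -
  have "sum_list (rev (map length T)) = length w"
    using assms by (simp add: reading_word_def length_concat) (metis rev_map sum_list_rev)
  then show ?thesis unfolding unread_def reading_word_def
    by (simp add: concat_split_lengths)
qed

lemma sum_list_update:
  fixes xs :: "nat list"
  shows
  "p < length xs \<Longrightarrow> sum_list (xs[p := v]) + xs ! p = sum_list xs + v"
proof (induction xs arbitrary: p)
  case Nil then show ?case by simp
next
  case (Cons a xs)
  show ?case
  proof (cases p)
    case 0 then show ?thesis by (simp add: algebra_simps)
  next
    case (Suc q)
    then have "sum_list (xs[q:=v]) + xs!q = sum_list xs + v" using Cons by simp
    then show ?thesis using Suc by simp
  qed
qed

definition rk :: "nat list list \<Rightarrow> nat" where
  "rk T = sum_list (reading_word T)"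

lemma F_step:
  assumes "crystal_F i T = Some T'"
  shows "\<exists>p < length (reading_word T). reading_word T ! p = i \<and>
           reading_word T' = (reading_word T)[p := Suc i]"
proof -
  let ?w = "reading_word T"
  let ?ps = "unmatched_pos i 0 0 ?w"
  have ne: "?ps \<noteq> []" and T': "T' = unread (map length T) (?w[last ?ps := Suc i])"
    using assms unfolding crystal_F_def Let_def by (auto split: if_splits)
  have "last ?ps \<in> set ?ps" using ne by simp
  from up_props[OF this] have p: "last ?ps < length ?w" "?w ! last ?ps = i" by auto
  have "reading_word T' = ?w[last ?ps := Suc i]"
    unfolding T' by (rule rw_unread) simp
  with p show ?thesis by blast
qed

lemma F_rk: "crystal_F i T = Some T' \<Longrightarrow> rk T' = Suc (rk T)"
proof -
  assume "crystal_F i T = Some T'"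
  from F_step[OF this] obtain p where p: "p < length (reading_word T)"
    "reading_word T ! p = i" "reading_word T' = (reading_word T)[p := Suc i]" by blast
  have "sum_list ((reading_word T)[p := Suc i]) + reading_word T ! p = sum_list (reading_word T) + Suc i"
    using sum_list_update[OF p(1)] .
  then show ?thesis unfolding rk_def using p by simp
qed

lemma le_rk: "crystal_le nu N T T' \<Longrightarrow> rk T \<le> rk T'"
  unfolding crystal_le_def
proof (induction rule: rtrancl_induct)
  case base then show ?case by simp
next
  case (step y z)
  then show ?case using F_rk unfolding crystal_step_def by fastforce
qed

lemma le_rk_eq: "crystal_le nu N T T' \<Longrightarrow> rk T' = rk T \<Longrightarrow> T = T'"
  unfolding crystal_le_def
proof (erule converse_rtranclE)
  fix U assume "(T, U) \<in> crystal_step nu N" "(U, T') \<in> (crystal_step nu N)\<^sup>*" "rk T' = rk T"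
  then show "T = T'" using F_rk le_rk[of nu N U T'] unfolding crystal_step_def crystal_le_def
    by fastforce
qed simp

lemma le_rk_suc: "crystal_le nu N T T' \<Longrightarrow> rk T' = Suc (rk T) \<Longrightarrow>
   \<exists>i\<in>{1..N}. crystal_F i T = Some T'"
  unfolding crystal_le_def
proof (erule converse_rtranclE)
  fix U assume a: "(T, U) \<in> crystal_step nu N" "(U, T') \<in> (crystal_step nu N)\<^sup>*" "rk T' = Suc (rk T)"
  then obtain i where i: "i\<in>{1..N}" "crystal_F i T = Some U" unfolding crystal_step_def by auto
  then have "rk U = rk T'" using F_rk a by simp
  then have "U = T'" using le_rk_eq[of nu N U T'] a(2) unfolding crystal_le_def by simp
  then show ?thesis using i by blast
qed simp


definition shp :: "nat \<Rightarrow> nat \<Rightarrow> nat" where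
  "shp m r = (if r < m then 3 else if r = m then 2 else 1)"

definition mk :: "nat \<Rightarrow> nat \<Rightarrow> (nat \<Rightarrow> nat \<Rightarrow> nat) \<Rightarrow> nat list list" where
  "mk l m e = map (\<lambda>r. map (e r) [0..<shp m r]) [0..<l]"

lemma lam_eq:
  assumes "m < l"
  shows "replicate m 3 @ [2] @ replicate (l - m - 1) 1 = map (shp m) [0..<l]"
proof (rule nth_equalityI)
  show "length (replicate m 3 @ [2] @ replicate (l - m - 1) 1) = length (map (shp m) [0..<l])"
    using assms by simp
next
  fix i assume "i < length (replicate m 3 @ [2] @ replicate (l - m - 1) (1::nat))"
  then have i: "i < l" using assms by simp
  show "(replicate m 3 @ [2] @ replicate (l - m - 1) 1) ! i = map (shp m) [0..<l] ! i"
    using i assms by (auto simp: nth_append shp_def)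
qed

lemma shp_mono: "shp m (Suc r) \<le> shp m r"
  by (simp add: shp_def)

lemma ssyt_mk:
  assumes b: "\<forall>r<l. \<forall>c<shp m r. 1 \<le> e r c \<and> e r c \<le> N + 1"
    and rw: "\<forall>r<l. \<forall>c. Suc c < shp m r \<longrightarrow> e r c \<le> e r (Suc c)"
    and cl: "\<forall>r c. Suc r < l \<and> c < shp m (Suc r) \<longrightarrow> e r c < e (Suc r) c"
  shows "ssyt N (map (shp m) [0..<l]) (mk l m e)"
  unfolding ssyt_def mk_def
proof (intro conjI allI impI)
  fix r c assume a: "Suc r < length (map (shp m) [0..<l]) \<and> c < map (shp m) [0..<l] ! Suc r"
  then have "Suc r < l" "c < shp m (Suc r)" by auto
  then have "c < shp m r" using shp_mono[of m r] by simp
  then show "map (\<lambda>r. map (e r) [0..<shp m r]) [0..<l] ! r ! c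
          < map (\<lambda>r. map (e r) [0..<shp m r]) [0..<l] ! Suc r ! c"
    using a cl \<open>Suc r < l\<close> \<open>c < shp m (Suc r)\<close> by simp
qed (use b rw in auto)

lemma map_length_mk: "map length (mk l m e) = map (shp m) [0..<l]"
  by (simp add: mk_def comp_def)

lemma rw_split:
  assumes "a \<le> l"
  shows "concat (rev (map R [0..<l])) = concat (rev (map R [a..<l])) @ concat (rev (map R [0..<a]))"
proof -
  have "[0..<l] = [0..<a] @ [a..<l]" using assms
    by (metis le_add_same_cancel1 le_iff_add upt_add_eq_append zero_le)
  then show ?thesis by simp
qed

lemma F_core:
  assumes rwT: "reading_word T = P @ mid @ Q"
    and P: "\<forall>y\<in>set P. y \<noteq> i \<and> y \<noteq> Suc i"
    and Q: "\<forall>y\<in>set Q. y \<noteq> i \<and> y \<noteq> Suc i"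
  shows "crystal_F i T = (let ps = unmatched_pos i 0 0 mid in if ps = [] then None
           else Some (unread (map length T) (P @ mid[last ps := Suc i] @ Q)))"
proof -
  have u: "unmatched_pos i 0 0 (P @ mid @ Q) = map (\<lambda>x. x + length P) (unmatched_pos i 0 0 mid)"
    using up_skip_pre[OF P, of 0 0 "mid @ Q"] up_skip_suf[OF Q, of 0 "length P" mid]
      up_offset[of i 0 0 "length P" mid] by simp
  show ?thesis
  proof (cases "unmatched_pos i 0 0 mid = []")
    case True then show ?thesis unfolding crystal_F_def Let_def rwT u by simp
  next
    case False
    let ?j = "last (unmatched_pos i 0 0 mid)"
    have "?j \<in> set (unmatched_pos i 0 0 mid)" using False by simp
    from up_props[OF this] have j: "?j < length mid" by simp
    have l: "last (map (\<lambda>x. x + length P) (unmatched_pos i 0 0 mid)) = ?j + length P"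
      using False by (simp add: last_map)
    have "(P @ mid @ Q)[?j + length P := Suc i] = P @ mid[?j := Suc i] @ Q"
      using j by (simp add: list_update_append)
    then show ?thesis using False unfolding crystal_F_def Let_def rwT u l by simp
  qed
qed

lemma F_some:
  assumes "reading_word T = P @ mid @ Q" "reading_word T' = P @ mid' @ Q"
    "map length T = map length T'"
    "\<forall>y\<in>set P. y \<noteq> i \<and> y \<noteq> Suc i" "\<forall>y\<in>set Q. y \<noteq> i \<and> y \<noteq> Suc i"
    "unmatched_pos i 0 0 mid \<noteq> []"
    "mid[last (unmatched_pos i 0 0 mid) := Suc i] = mid'"
  shows "crystal_F i T = Some T'"
  using F_core[OF assms(1,4,5)] assms(2,3,6,7) unread_rw[of T'] by (simp add: Let_def)

lemma F_none:
  assumes "reading_word T = P @ mid @ Q"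
    "\<forall>y\<in>set P. y \<noteq> i \<and> y \<noteq> Suc i" "\<forall>y\<in>set Q. y \<noteq> i \<and> y \<noteq> Suc i"
    "unmatched_pos i 0 0 mid = []"
  shows "crystal_F i T = None"
  using F_core[OF assms(1,2,3)] assms(4) by (simp add: Let_def)

lemma F_ne:
  assumes "reading_word T = P @ mid @ Q" "reading_word T' = P @ mid' @ Q"
    "\<forall>y\<in>set P. y \<noteq> i \<and> y \<noteq> Suc i" "\<forall>y\<in>set Q. y \<noteq> i \<and> y \<noteq> Suc i"
    "unmatched_pos i 0 0 mid \<noteq> []"
    "mid[last (unmatched_pos i 0 0 mid) := Suc i] \<noteq> mid'"
  shows "crystal_F i T \<noteq> Some T'"
proof
  assume F: "crystal_F i T = Some T'"
  let ?w = "P @ mid[last (unmatched_pos i 0 0 mid) := Suc i] @ Q"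
  have "T' = unread (map length T) ?w"
    using F_core[OF assms(1,3,4)] assms(5) F by (simp add: Let_def)
  then have "reading_word T' = ?w"
    using rw_unread[of ?w T] assms(1) by simp
  then show False using assms(2,6) by simp
qed

lemma step_pos:
  assumes F: "crystal_F i T = Some T'"
    and r: "reading_word T = P @ mid @ Q" "reading_word T' = P @ mid' @ Q"
    and q: "q < length mid" "length mid' = length mid" "mid ! q \<noteq> mid' ! q"
  shows "i = mid ! q \<and> mid' ! q = Suc i"
proof -
  obtain p where p: "p < length (reading_word T)" "reading_word T ! p = i"
    "reading_word T' = (reading_word T)[p := Suc i]" using F_step[OF F] by blast
  have a: "reading_word T ! (length P + q) = mid ! q" "reading_word T' ! (length P + q) = mid' ! q"
    using r q(1,2) by (simp_all add: nth_append)
  have lq: "length P + q < length (reading_word T)" using r q(1) by simp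
  have "reading_word T' ! (length P + q) = (if p = length P + q then Suc i else reading_word T ! (length P + q))"
    using p(3) lq by simp
  then have "p = length P + q" using a q(3) by (auto split: if_splits)
  then show ?thesis using a p by (auto simp: nth_list_update)
qed


definition eB :: "nat \<Rightarrow> nat \<Rightarrow> nat \<Rightarrow> nat \<Rightarrow> nat \<Rightarrow> nat \<Rightarrow> nat" where
  "eB k a b c r col = (if r = k \<and> col = 2 then a else if r = Suc k \<and> col = 1 then b
     else if r = Suc k \<and> col = 2 then c else if r = k + 2 \<and> col = 1 then k + 5 else r + 1)"

definition TB :: "nat \<Rightarrow> nat \<Rightarrow> nat \<Rightarrow> nat \<Rightarrow> nat \<Rightarrow> nat list list" where
  "TB l k a b c = mk l (k + 2) (eB k a b c)"

definition PB :: "nat \<Rightarrow> nat \<Rightarrow> nat list" where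
  "PB l k = concat (rev (map (\<lambda>r. [r + 1]) [k + 4..<l]))"

definition QB :: "nat \<Rightarrow> nat list" where
  "QB k = concat (rev (map (\<lambda>r. [r + 1, r + 1, r + 1]) [0..<k]))"

definition midB :: "nat \<Rightarrow> nat \<Rightarrow> nat \<Rightarrow> nat \<Rightarrow> nat list" where
  "midB k a b c = [k + 4, k + 3, k + 5, k + 2, b, c, k + 1, k + 1, a]"

lemma u3: "[0..<3] = [0,1,2::nat]" by (simp add: numeral_3_eq_3)
lemma u2: "[0..<2] = [0,1::nat]" by (simp add: numeral_2_eq_2)
lemma u4: "[k..<k+4] = [k, Suc k, Suc (Suc k), Suc (Suc (Suc k))]"
    by (simp add: numeral_eq_Suc)

lemma rwB:
  assumes "k + 4 \<le> l"
  shows "reading_word (TB l k a b c) = PB l k @ midB k a b c @ QB k"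
proof -
  let ?R = "\<lambda>r. map (eB k a b c r) [0..<shp (k + 2) r]"
  have 1: "concat (rev (map ?R [0..<l])) = concat (rev (map ?R [k+4..<l])) @ concat (rev (map ?R [0..<k+4]))"
    using rw_split assms by blast
  have 2: "concat (rev (map ?R [0..<k+4])) = concat (rev (map ?R [k..<k+4])) @ concat (rev (map ?R [0..<k]))"
    using rw_split[of k "k+4"] by simp
  have 3: "map ?R [k+4..<l] = map (\<lambda>r. [r + 1]) [k + 4..<l]"
    by (rule map_cong) (auto simp: shp_def eB_def)
  have 4: "map ?R [0..<k] = map (\<lambda>r. [r + 1, r + 1, r + 1]) [0..<k]"
    by (rule map_cong) (auto simp: shp_def eB_def u3)
  have 5: "concat (rev (map ?R [k..<k+4])) = midB k a b c"
    unfolding u4 by (simp add: shp_def eB_def midB_def u3 u2)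
  show ?thesis unfolding reading_word_def TB_def mk_def 1 2 3 4 5 PB_def QB_def by simp
qed

lemma PB_set: "y \<in> set (PB l k) \<Longrightarrow> k + 5 \<le> y"
  by (auto simp: PB_def)

lemma QB_set: "y \<in> set (QB k) \<Longrightarrow> y \<le> k"
  by (auto simp: QB_def)

lemma ml_TB: "map length (TB l k a b c) = map length (TB l k a' b' c')"
  by (simp add: TB_def map_length_mk)

lemma ssyt_B:
  assumes "k + 4 \<le> l" "l \<le> n" "k + 1 \<le> a" "a < c" "k + 1 < b" "b \<le> c" "b < k + 5" "c \<le> n + 1"
  shows "TB l k a b c \<in> crystal_B (map (shp (k + 2)) [0..<l]) n"
  unfolding crystal_B_def TB_def mem_Collect_eq
proof (rule ssyt_mk)
  show "\<forall>r<l. \<forall>cc<shp (k + 2) r. 1 \<le> eB k a b c r cc \<and> eB k a b c r cc \<le> n + 1"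
  proof (intro allI impI)
    fix r cc assume "r < l" "cc < shp (k + 2) r"
    then show "1 \<le> eB k a b c r cc \<and> eB k a b c r cc \<le> n + 1"
      using assms by (auto simp: eB_def)
  qed
  show "\<forall>r<l. \<forall>cc. Suc cc < shp (k + 2) r \<longrightarrow> eB k a b c r cc \<le> eB k a b c r (Suc cc)"
  proof (intro allI impI)
    fix r cc assume a: "r < l" "Suc cc < shp (k + 2) r"
    then have "r < k + 3" "cc < 2" by (auto simp: shp_def split: if_splits)
    then consider "r < k" | "r = k" | "r = Suc k" | "r = k + 2" and "cc = 0" | "r = k + 2" and "cc = 1"
      | "r = k + 2" and "cc > 1" by linarith
    then show "eB k a b c r cc \<le> eB k a b c r (Suc cc)"
    proof cases
    qed (use assms a in \<open>auto simp: eB_def shp_def\<close>)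
  qed
  show "\<forall>r cc. Suc r < l \<and> cc < shp (k + 2) (Suc r) \<longrightarrow> eB k a b c r cc < eB k a b c (Suc r) cc"
  proof (intro allI impI)
    fix r cc assume a: "Suc r < l \<and> cc < shp (k + 2) (Suc r)"
    consider "Suc r < k" | "Suc r = k" | "r = k" | "r = Suc k" | "r \<ge> k + 2" by linarith
    then show "eB k a b c r cc < eB k a b c (Suc r) cc"
    proof cases
    qed (use assms a in \<open>auto simp: eB_def shp_def\<close>)
  qed
qed


lemma le_step: "T \<in> crystal_B nu N \<Longrightarrow> i \<in> {1..N} \<Longrightarrow> crystal_F i T = Some T' \<Longrightarrow> crystal_le nu N T T'"
proof -
  assume a: "T \<in> crystal_B nu N" "i \<in> {1..N}" "crystal_F i T = Some T'"
  have "(T, T') \<in> crystal_step nu N" unfolding crystal_step_def using a by blast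
  then show ?thesis unfolding crystal_le_def by (rule r_into_rtrancl)
qed

lemma le_trans': "crystal_le nu N T U \<Longrightarrow> crystal_le nu N U V \<Longrightarrow> crystal_le nu N T V"
  unfolding crystal_le_def by (rule rtrancl_trans)

lemma famB:
  assumes kl: "k + 4 \<le> l" and ln: "l \<le> n"
  shows "\<not> is_lattice_on (crystal_B (map (shp (k+2)) [0..<l]) n) (crystal_le (map (shp (k+2)) [0..<l]) n)"
proof
  define nu where "nu = map (shp (k+2)) [0..<l]"
  define X where "X = TB l k (k+1) (k+2) (k+4)"
  define Y where "Y = TB l k (k+2) (k+2) (k+3)"
  define Z1 where "Z1 = TB l k (k+2) (k+2) (k+4)"
  define Z2 where "Z2 = TB l k (k+2) (k+3) (k+4)"
  define X' where "X' = TB l k (k+1) (k+3) (k+4)"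
  define Y' where "Y' = TB l k (k+2) (k+3) (k+3)"
  have mX: "X \<in> crystal_B nu n" unfolding X_def nu_def by (rule ssyt_B) (use kl ln in auto)
  have mY: "Y \<in> crystal_B nu n" unfolding Y_def nu_def by (rule ssyt_B) (use kl ln in auto)
  have mZ1: "Z1 \<in> crystal_B nu n" unfolding Z1_def nu_def by (rule ssyt_B) (use kl ln in auto)
  have mZ2: "Z2 \<in> crystal_B nu n" unfolding Z2_def nu_def by (rule ssyt_B) (use kl ln in auto)
  have mX': "X' \<in> crystal_B nu n" unfolding X'_def nu_def by (rule ssyt_B) (use kl ln in auto)
  have mY': "Y' \<in> crystal_B nu n" unfolding Y'_def nu_def by (rule ssyt_B) (use kl ln in auto)
  have P: "\<forall>y\<in>set (PB l k). y \<noteq> i \<and> y \<noteq> Suc i" if "i \<le> k + 3" for i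
    using PB_set that by fastforce
  have Q: "\<forall>y\<in>set (QB k). y \<noteq> i \<and> y \<noteq> Suc i" if "k + 1 \<le> i" for i
    using QB_set that by fastforce
  note rw = rwB[OF kl]
  have e1: "crystal_F (k+1) X = Some Z1" unfolding X_def Z1_def
    by (rule F_some[OF rw rw ml_TB P Q]) (simp_all add: midB_def)
  have e2: "crystal_F (k+3) Y = Some Z1" unfolding Y_def Z1_def
    by (rule F_some[OF rw rw ml_TB P Q]) (simp_all add: midB_def)
  have e3: "crystal_F (k+2) X = Some X'" unfolding X_def X'_def
    by (rule F_some[OF rw rw ml_TB P Q]) (simp_all add: midB_def)
  have e4: "crystal_F (k+1) X' = Some Z2" unfolding X'_def Z2_def
    by (rule F_some[OF rw rw ml_TB P Q]) (simp_all add: midB_def)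
  have e5: "crystal_F (k+2) Y = Some Y'" unfolding Y_def Y'_def
    by (rule F_some[OF rw rw ml_TB P Q]) (simp_all add: midB_def)
  have e6: "crystal_F (k+3) Y' = Some Z2" unfolding Y'_def Z2_def
    by (rule F_some[OF rw rw ml_TB P Q]) (simp_all add: midB_def)
  have ne: "crystal_F (k+2) Z1 \<noteq> Some Z2" unfolding Z1_def Z2_def
    by (rule F_ne[OF rw rw P Q]) (simp_all add: midB_def)
  have i1: "k + 1 \<in> {1..n}" "k + 2 \<in> {1..n}" "k + 3 \<in> {1..n}" using kl ln by auto
  have lXZ1: "crystal_le nu n X Z1" by (rule le_step[OF mX i1(1) e1])
  have lYZ1: "crystal_le nu n Y Z1" by (rule le_step[OF mY i1(3) e2])
  have lXZ2: "crystal_le nu n X Z2"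
    by (rule le_trans'[OF le_step[OF mX i1(2) e3] le_step[OF mX' i1(1) e4]])
  have lYZ2: "crystal_le nu n Y Z2"
    by (rule le_trans'[OF le_step[OF mY i1(2) e5] le_step[OF mY' i1(3) e6]])
  have rk1: "rk Z1 = Suc (rk X)" "rk Z1 = Suc (rk Y)" using F_rk[OF e1] F_rk[OF e2] by auto
  have rk2: "rk Z2 = Suc (rk Z1)" using F_rk[OF e3] F_rk[OF e4] rk1 by simp
  have XY: "X \<noteq> Y"
  proof
    assume "X = Y"
    then have "reading_word X = reading_word Y" by simp
    then show False unfolding X_def Y_def rw by (simp add: midB_def)
  qed
  assume "is_lattice_on (crystal_B nu n) (crystal_le nu n)"
  then obtain j where j: "j \<in> crystal_B nu n" "crystal_le nu n X j" "crystal_le nu n Y j"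
    "\<forall>u\<in>crystal_B nu n. crystal_le nu n X u \<and> crystal_le nu n Y u \<longrightarrow> crystal_le nu n j u"
    using mX mY unfolding is_lattice_on_def by blast
  have jZ1: "crystal_le nu n j Z1" using j(4) mZ1 lXZ1 lYZ1 by blast
  have jZ2: "crystal_le nu n j Z2" using j(4) mZ2 lXZ2 lYZ2 by blast
  have "rk X \<le> rk j" "rk j \<le> rk Z1" using le_rk j(2) jZ1 by auto
  then consider "rk j = rk X" | "rk j = rk Z1" using rk1 by linarith
  then show False
  proof cases
    case 1
    then have "X = j" using le_rk_eq j(2) by metis
    moreover have "rk j = rk Y" using 1 rk1 by simp
    ultimately have "Y = j" using le_rk_eq j(3) by metis
    then show False using XY \<open>X = j\<close> by simp
  next
    case 2
    then have "j = Z1" using le_rk_eq jZ1 by metis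
    then have "crystal_le nu n Z1 Z2" using jZ2 by simp
    then obtain i where i: "crystal_F i Z1 = Some Z2" using le_rk_suc rk2 by blast
    have m1: "midB k (k+2) (k+2) (k+4) ! 4 = k+2" "midB k (k+2) (k+3) (k+4) ! 4 = k+3"
      "length (midB k (k+2) (k+2) (k+4)) = 9" "length (midB k (k+2) (k+3) (k+4)) = 9"
      by (simp_all add: midB_def)
    have "i = midB k (k+2) (k+2) (k+4) ! 4"
      using step_pos[OF i[unfolded Z1_def Z2_def] rw rw, where q=4] m1 by linarith
    then have "i = k + 2" using m1 by simp
    then show False using i ne by simp
  qed
qed


definition eA :: "nat \<Rightarrow> nat \<Rightarrow> nat \<Rightarrow> nat \<Rightarrow> nat \<Rightarrow> nat" where
  "eA u v w r c = (if r = 0 then (if c = 0 then 1 else if c = 1 then u else v)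
     else if r = 1 then (if c = 0 then w else 5) else r + 2)"

definition TA :: "nat \<Rightarrow> nat \<Rightarrow> nat \<Rightarrow> nat \<Rightarrow> nat list list" where
  "TA l u v w = mk l 1 (eA u v w)"

definition PA :: "nat \<Rightarrow> nat list" where
  "PA l = concat (rev (map (\<lambda>r. [r + 2]) [3..<l]))"

definition midA :: "nat \<Rightarrow> nat \<Rightarrow> nat \<Rightarrow> nat list" where
  "midA u v w = [4, w, 5, 1, u, v]"

lemma rwA:
  assumes "3 \<le> l"
  shows "reading_word (TA l u v w) = PA l @ midA u v w @ []"
proof -
  let ?R = "\<lambda>r. map (eA u v w r) [0..<shp 1 r]"
  have 1: "concat (rev (map ?R [0..<l])) = concat (rev (map ?R [3..<l])) @ concat (rev (map ?R [0..<3]))"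
    using rw_split assms by blast
  have 3: "map ?R [3..<l] = map (\<lambda>r. [r + 2]) [3..<l]"
    by (rule map_cong) (auto simp: shp_def eA_def)
  have 5: "concat (rev (map ?R [0..<3])) = midA u v w"
    unfolding u3 by (simp add: shp_def eA_def midA_def u3 u2)
  show ?thesis unfolding reading_word_def TA_def mk_def 1 3 5 PA_def by simp
qed

lemma PA_set: "y \<in> set (PA l) \<Longrightarrow> 5 \<le> y"
  by (auto simp: PA_def)

lemma ml_TA: "map length (TA l u v w) = map length (TA l u' v' w')"
  by (simp add: TA_def map_length_mk)

lemma ssyt_A:
  assumes "4 \<le> l" "l \<le> n" "1 \<le> u" "u \<le> v" "u < 5" "1 < w" "w < 4" "v \<le> n + 1"
  shows "TA l u v w \<in> crystal_B (map (shp 1) [0..<l]) n"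
  unfolding crystal_B_def TA_def mem_Collect_eq
proof (rule ssyt_mk)
  show "\<forall>r<l. \<forall>cc<shp 1 r. 1 \<le> eA u v w r cc \<and> eA u v w r cc \<le> n + 1"
  proof (intro allI impI)
    fix r cc assume "r < l" "cc < shp 1 r"
    then show "1 \<le> eA u v w r cc \<and> eA u v w r cc \<le> n + 1"
      using assms by (auto simp: eA_def)
  qed
  show "\<forall>r<l. \<forall>cc. Suc cc < shp 1 r \<longrightarrow> eA u v w r cc \<le> eA u v w r (Suc cc)"
  proof (intro allI impI)
    fix r cc assume a: "r < l" "Suc cc < shp 1 r"
    then have "r < 2" "cc < 2" by (auto simp: shp_def split: if_splits)
    then consider "r = 0" and "cc = 0" | "r = 0" and "cc = 1" | "r = 1" and "cc = 0" | "r = 1" and "cc = 1"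
      by linarith
    then show "eA u v w r cc \<le> eA u v w r (Suc cc)"
    proof cases
    qed (use assms a in \<open>auto simp: eA_def shp_def\<close>)
  qed
  show "\<forall>r cc. Suc r < l \<and> cc < shp 1 (Suc r) \<longrightarrow> eA u v w r cc < eA u v w (Suc r) cc"
  proof (intro allI impI)
    fix r cc assume a: "Suc r < l \<and> cc < shp 1 (Suc r)"
    consider "r = 0" | "r = 1" | "r \<ge> 2" by linarith
    then show "eA u v w r cc < eA u v w (Suc r) cc"
    proof cases
    qed (use assms a in \<open>auto simp: eA_def shp_def\<close>)
  qed
qed

lemma famA:
  assumes kl: "4 \<le> l" and ln: "l \<le> n"
  shows "\<not> is_lattice_on (crystal_B (map (shp 1) [0..<l]) n) (crystal_le (map (shp 1) [0..<l]) n)"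
proof
  define nu where "nu = map (shp 1) [0..<l]"
  define X where "X = TA l 1 3 2"
  define X1 where "X1 = TA l 2 3 2"
  define X2 where "X2 = TA l 3 3 2"
  define Z1 where "Z1 = TA l 3 4 2"
  define Y where "Y = TA l 1 4 2"
  define Y1 where "Y1 = TA l 2 4 2"
  define X3 where "X3 = TA l 1 3 3"
  define Z2 where "Z2 = TA l 1 4 3"
  have mX: "X \<in> crystal_B nu n" unfolding X_def nu_def by (rule ssyt_A) (use kl ln in auto)
  have mX1: "X1 \<in> crystal_B nu n" unfolding X1_def nu_def by (rule ssyt_A) (use kl ln in auto)
  have mX2: "X2 \<in> crystal_B nu n" unfolding X2_def nu_def by (rule ssyt_A) (use kl ln in auto)
  have mX3: "X3 \<in> crystal_B nu n" unfolding X3_def nu_def by (rule ssyt_A) (use kl ln in auto)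
  have mY: "Y \<in> crystal_B nu n" unfolding Y_def nu_def by (rule ssyt_A) (use kl ln in auto)
  have mY1: "Y1 \<in> crystal_B nu n" unfolding Y1_def nu_def by (rule ssyt_A) (use kl ln in auto)
  have mZ1: "Z1 \<in> crystal_B nu n" unfolding Z1_def nu_def by (rule ssyt_A) (use kl ln in auto)
  have mZ2: "Z2 \<in> crystal_B nu n" unfolding Z2_def nu_def by (rule ssyt_A) (use kl ln in auto)
  have P: "\<forall>y\<in>set (PA l). y \<noteq> i \<and> y \<noteq> Suc i" if "i \<le> 3" for i
    using PA_set that by fastforce
  have Q: "\<forall>y\<in>set ([]::nat list). y \<noteq> i \<and> y \<noteq> Suc i" for i by simp
  have l3: "3 \<le> l" using kl by simp
  note rw = rwA[OF l3]
  have e1: "crystal_F 1 X = Some X1" unfolding X_def X1_def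
    by (rule F_some[OF rw rw ml_TA P Q]) (simp_all add: midA_def)
  have e2: "crystal_F 2 X1 = Some X2" unfolding X1_def X2_def
    by (rule F_some[OF rw rw ml_TA P Q]) (simp_all add: midA_def)
  have e3: "crystal_F 3 X2 = Some Z1" unfolding X2_def Z1_def
    by (rule F_some[OF rw rw ml_TA P Q]) (simp_all add: midA_def)
  have e4: "crystal_F 1 Y = Some Y1" unfolding Y_def Y1_def
    by (rule F_some[OF rw rw ml_TA P Q]) (simp_all add: midA_def)
  have e5: "crystal_F 2 Y1 = Some Z1" unfolding Y1_def Z1_def
    by (rule F_some[OF rw rw ml_TA P Q]) (simp_all add: midA_def)
  have e6: "crystal_F 2 X = Some X3" unfolding X_def X3_def
    by (rule F_some[OF rw rw ml_TA P Q]) (simp_all add: midA_def)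
  have e7: "crystal_F 3 X3 = Some Z2" unfolding X3_def Z2_def
    by (rule F_some[OF rw rw ml_TA P Q]) (simp_all add: midA_def)
  have e8: "crystal_F 2 Y = Some Z2" unfolding Y_def Z2_def
    by (rule F_some[OF rw rw ml_TA P Q]) (simp_all add: midA_def)
  have none: "crystal_F 3 X = None" unfolding X_def
    by (rule F_none[OF rw P Q]) (simp_all add: midA_def)
  have i1: "1 \<in> {1..n}" "2 \<in> {1..n}" "3 \<in> {1..n}" using kl ln by auto
  have lXZ1: "crystal_le nu n X Z1"
    by (rule le_trans'[OF le_step[OF mX i1(1) e1] le_trans'[OF le_step[OF mX1 i1(2) e2] le_step[OF mX2 i1(3) e3]]])
  have lYZ1: "crystal_le nu n Y Z1"
    by (rule le_trans'[OF le_step[OF mY i1(1) e4] le_step[OF mY1 i1(2) e5]])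
  have lXZ2: "crystal_le nu n X Z2"
    by (rule le_trans'[OF le_step[OF mX i1(2) e6] le_step[OF mX3 i1(3) e7]])
  have lYZ2: "crystal_le nu n Y Z2" by (rule le_step[OF mY i1(2) e8])
  have rks: "rk Y = Suc (rk X)" "rk Z2 = Suc (rk Y)" "rk Z1 = Suc (rk Z2)"
    using F_rk[OF e1] F_rk[OF e2] F_rk[OF e3] F_rk[OF e4] F_rk[OF e5] F_rk[OF e6] F_rk[OF e7] F_rk[OF e8]
    by simp_all
  assume "is_lattice_on (crystal_B nu n) (crystal_le nu n)"
  then obtain j where j: "j \<in> crystal_B nu n" "crystal_le nu n X j" "crystal_le nu n Y j"
    "\<forall>u\<in>crystal_B nu n. crystal_le nu n X u \<and> crystal_le nu n Y u \<longrightarrow> crystal_le nu n j u"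
    using mX mY unfolding is_lattice_on_def by blast
  have jZ1: "crystal_le nu n j Z1" using j(4) mZ1 lXZ1 lYZ1 by blast
  have jZ2: "crystal_le nu n j Z2" using j(4) mZ2 lXZ2 lYZ2 by blast
  have "rk Y \<le> rk j" "rk j \<le> rk Z2" using le_rk j(3) jZ2 by auto
  then consider "rk j = rk Y" | "rk j = rk Z2" using rks by linarith
  then show False
  proof cases
    case 1
    then have "Y = j" using le_rk_eq j(3) by metis
    then have "crystal_le nu n X Y" using j(2) by simp
    then obtain i where i: "crystal_F i X = Some Y" using le_rk_suc rks(1) by blast
    have m1: "midA 1 3 2 ! 5 = 3" "midA 1 4 2 ! 5 = 4"
      "length (midA 1 3 2) = 6" "length (midA 1 4 2) = 6"
      by (simp_all add: midA_def)
    have "i = midA 1 3 2 ! 5"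
      using step_pos[OF i[unfolded X_def Y_def] rw rw, where q=5] m1 by linarith
    then have "i = 3" using m1 by simp
    then show False using i none by simp
  next
    case 2
    then have "j = Z2" using le_rk_eq jZ2 by metis
    then have "crystal_le nu n Z2 Z1" using jZ1 by simp
    then obtain i where i: "crystal_F i Z2 = Some Z1" using le_rk_suc rks(3) by blast
    have m1: "midA 1 4 3 ! 1 = 3" "midA 3 4 2 ! 1 = 2"
      "length (midA 1 4 3) = 6" "length (midA 3 4 2) = 6"
      by (simp_all add: midA_def)
    show False
      using step_pos[OF i[unfolded Z1_def Z2_def] rw rw, where q=1] m1 by linarith
  qed
qed

theorem lemma5p7:
  fixes lam :: "nat list" and l m n :: nat
  assumes "l \<ge> 4" and "n \<ge> l" and "1 \<le> m" and "m \<le> l - 2"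
    and "lam = replicate m 3 @ [2] @ replicate (l - m - 1) 1"
  shows "\<not> is_lattice_on (crystal_B lam n) (crystal_le lam n)"
proof -
  have lam: "lam = map (shp m) [0..<l]" using assms lam_eq[of m l] by simp
  show ?thesis
  proof (cases "m = 1")
    case True
    then show ?thesis unfolding lam using famA assms by simp
  next
    case False
    then obtain k where k: "m = k + 2" using assms(3)
      by (metis add.commute add_2_eq_Suc le_Suc_ex le_antisym not_less_eq_eq one_add_one plus_1_eq_Suc)
    have "k + 4 \<le> l" using assms k by linarith
    then show ?thesis unfolding lam k using famB assms by simp
  qed
qed

end
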